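(* Let $\mathcal{X}=\{x^{(1)},\dots,x^{(L)}\}\subset\mathbb{C}$ with $L$ distinct symbols. If a constant composition $(n,M,\mathcal{X})$-code $\mathscr{C}$ with $P_{\mathscr{C}}(x^{(\ell)})>0$ for all $\ell$ is an $(n,M,\mathcal{X},\epsilon,B,\delta)$-code for the complex AWGN channel below, then \[ R(\mathscr{C})\le H(P_{\mathscr{C}})+\frac{1}{n^2}\left(\frac{1}{12}-\sum_{\ell=1}^L\frac{1}{12P_{\mathscr{C}}(x^{(\ell)})+1}\right)+\frac1n\left(\log_2\sqrt{2\pi}-\sum_{\ell=1}^L\log_2\sqrt{2\pi P_{\mathscr{C}}(x^{(\ell)})}\right)-\frac{\log_2 n}{n}\cdot\frac{L-1}{2}, \] where $H(P_{\mathscr{C}})=-\sum_{\ell=1}^L P_{\mathscr{C}}(x^{(\ell)})\log_2 P_{\mathscr{C}}(x^{(\ell)})$.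
   Context: Channel: $f_{\boldsymbol{Y}|\boldsymbol{X}}(\boldsymbol{y}|\boldsymbol{\nu})=\prod_{m=1}^n \frac{1}{\pi\sigma^2}\exp(-|y_m-\nu_m|^2/\sigma^2)$. An $(n,M,\mathcal{X})$-code is $\{(\boldsymbol{u}(i),\mathcal{D}_i)\}_{i=1}^M$ with $\boldsymbol{u}(i)\in\mathcal{X}^n$ and pairwise disjoint $\mathcal{D}_i\subseteq\mathbb{C}^n$; $R(\mathscr{C})=\frac{\log_2 M}{n}$; $\gamma(\mathscr{C})=\frac1M\sum_i\big(1-\int_{\mathcal{D}_i}f_{\boldsymbol{Y}|\boldsymbol{X}}(\boldsymbol{y}|\boldsymbol{u}(i))\mathrm{d}\boldsymbol{y}\big)$; $e_i=k_1\sum_m|u_m(i)|^2+k_2\sum_m|u_m(i)|^4$ with positive constants $k_1,k_2$; $\theta(\mathscr{C},B)=\frac1M\sum_i\mathbb{1}_{\{e_i<B\}}$; $(n,M,\mathcal{X},\epsilon,B,\delta)$-code means $\gamma(\mathscr{C})\le\epsilon$ and $\theta(\mathscr{C},B)\le\delta$. Types: $P_{\boldsymbol{u}(i)}(x)=\frac1n\sum_{m}\mathbb{1}_{\{u_m(i)=x\}}$, $P_{\mathscr{C}}=\frac1M\sum_iP_{\boldsymbol{u}(i)}$; constant composition means $P_{\boldsymbol{u}(i)}=P_{\mathscr{C}}$ for all $i$.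
   Formalization: The codewords u(1), ..., u(M) of $\mathscr{C}$ are pairwise distinct, a condition absent from the definition of an (n,M,X)-code in the context. The statement above fails without it. *)

theory Defs
  imports "HOL-Analysis.Analysis"
begin

text \<open>Blocklength n is CARD('n); vectors in C^n are of type complex^'n.
  Codewords u i (i < M) and decoding regions D i (i < M).\<close>

definition awgn_density :: "real \<Rightarrow> complex^'n \<Rightarrow> complex^'n \<Rightarrow> real" where
  "awgn_density \<sigma> y \<nu> =
     (\<Prod>m\<in>UNIV. 1 / (pi * \<sigma>\<^sup>2) * exp (- (cmod (y $ m - \<nu> $ m))\<^sup>2 / \<sigma>\<^sup>2))"

definition is_code :: "nat \<Rightarrow> complex set \<Rightarrow> (nat \<Rightarrow> complex^'n) \<Rightarrow> (nat \<Rightarrow> (complex^'n) set) \<Rightarrow> bool" where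
  "is_code M X u D \<longleftrightarrow>
     (\<forall>i<M. \<forall>m. u i $ m \<in> X) \<and>
     (\<forall>i<M. D i \<in> sets lborel) \<and>
     (\<forall>i<M. \<forall>j<M. i \<noteq> j \<longrightarrow> D i \<inter> D j = {})"

definition code_rate :: "nat \<Rightarrow> 'n::finite itself \<Rightarrow> real" where
  "code_rate M (_::'n itself) = log 2 (real M) / real CARD('n)"

definition error_prob :: "real \<Rightarrow> nat \<Rightarrow> (nat \<Rightarrow> complex^'n::finite) \<Rightarrow> (nat \<Rightarrow> (complex^'n) set) \<Rightarrow> real" where
  "error_prob \<sigma> M u D =
     (1 / real M) * (\<Sum>i<M. 1 - (LINT y : D i | lborel. awgn_density \<sigma> y (u i)))"

definition energy :: "real \<Rightarrow> real \<Rightarrow> complex^'n::finite \<Rightarrow> real" where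
  "energy k1 k2 v = k1 * (\<Sum>m\<in>UNIV. (cmod (v $ m))^2) + k2 * (\<Sum>m\<in>UNIV. (cmod (v $ m))^4)"

definition theta :: "real \<Rightarrow> real \<Rightarrow> nat \<Rightarrow> (nat \<Rightarrow> complex^'n::finite) \<Rightarrow> real \<Rightarrow> real" where
  "theta k1 k2 M u B = (1 / real M) * (\<Sum>i<M. if energy k1 k2 (u i) < B then 1 else 0)"

definition is_code_eBd ::
  "real \<Rightarrow> real \<Rightarrow> real \<Rightarrow> nat \<Rightarrow> complex set \<Rightarrow> real \<Rightarrow> real \<Rightarrow> real
   \<Rightarrow> (nat \<Rightarrow> complex^'n::finite) \<Rightarrow> (nat \<Rightarrow> (complex^'n) set) \<Rightarrow> bool" where
  "is_code_eBd \<sigma> k1 k2 M X \<epsilon> B \<delta> u D \<longleftrightarrow>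
     is_code M X u D \<and> error_prob \<sigma> M u D \<le> \<epsilon> \<and> theta k1 k2 M u B \<le> \<delta>"

definition seq_type :: "complex^'n::finite \<Rightarrow> complex \<Rightarrow> real" where
  "seq_type v x = real (card {m. v $ m = x}) / real CARD('n)"

definition code_type :: "nat \<Rightarrow> (nat \<Rightarrow> complex^'n::finite) \<Rightarrow> complex \<Rightarrow> real" where
  "code_type M u x = (1 / real M) * (\<Sum>i<M. seq_type (u i) x)"

definition constant_composition :: "nat \<Rightarrow> (nat \<Rightarrow> complex^'n::finite) \<Rightarrow> bool" where
  "constant_composition M u \<longleftrightarrow> (\<forall>i<M. seq_type (u i) = code_type M u)"

definition entropy_list :: "complex list \<Rightarrow> (complex \<Rightarrow> real) \<Rightarrow> real" where
  "entropy_list xs P = - (\<Sum>l<length xs. P (xs ! l) * log 2 (P (xs ! l)))"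

end

theory Submission
  imports Defs "HOL-Analysis.Analysis" "HOL-Combinatorics.Multiset_Permutations"
begin


lemma ln_ratio_upper:
  fixes x :: real assumes x: "0 \<le> x" "x < 1"
  shows "ln (1 + x) - ln (1 - x) \<le> 2*x + 2*x^3/(3*(1-x^2))"
proof -
  let ?f = "\<lambda>t::real. 2*t + 2*t^3/(3*(1-t^2)) - (ln (1 + t) - ln (1 - t))"
  have "?f 0 \<le> ?f x"
  proof (rule DERIV_nonneg_imp_increasing_open[OF x(1)])
    fix t :: real assume t: "0 < t" "t < x"
    have t1: "1 - t^2 > 0" using t x by (smt (verit) mult_less_cancel_right1 power2_eq_square)
    have d: "DERIV ?f t :> 2 + 2*(3*t^2*(3*(1-t^2)) - t^3*(3*(-2*t)))/(3*(1-t^2))^2 - (1/(1+t) - (-1)/(1-t))"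
      using t x t1 by (auto intro!: derivative_eq_intros simp: power2_eq_square)
    have "2 + 2*(3*t^2*(3*(1-t^2)) - t^3*(3*(-2*t)))/(3*(1-t^2))^2 - (1/(1+t) - (-1)/(1-t))
        = 4*t^4/(3*(1-t^2)^2)"
    proof -
      have e: "1/(1+t) - (-1)/(1-t) = 2/(1-t^2)" using t1 t x by (simp add: field_simps power2_eq_square)
      show ?thesis unfolding e using t1 apply (simp add: divide_simps) by algebra
    qed
    moreover have "4*t^4/(3*(1-t^2)^2) \<ge> 0" by simp
    ultimately show "\<exists>y. DERIV ?f t :> y \<and> y \<ge> 0" using d by auto
  next
    have "\<forall>t\<in>{0..x}. 1 - t^2 \<noteq> 0 \<and> 1 + t > 0 \<and> 1 - t > 0"
      using x by (auto simp: power2_eq_square) (smt (verit) mult_le_one mult_strict_mono)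
    then show "continuous_on {0..x} ?f" by (intro continuous_intros) auto
  qed
  then show ?thesis by simp
qed

lemma ln_ratio_lower:
  fixes x :: real assumes x: "0 \<le> x" "x < 1"
  shows "2*x + 2*x^3/(3-x^2) \<le> ln (1 + x) - ln (1 - x)"
proof -
  let ?f = "\<lambda>t::real. (ln (1 + t) - ln (1 - t)) - (2*t + 2*t^3/(3-t^2))"
  have "?f 0 \<le> ?f x"
  proof (rule DERIV_nonneg_imp_increasing_open[OF x(1)])
    fix t :: real assume t: "0 < t" "t < x"
    have t1: "1 - t^2 > 0" using t x by (smt (verit) mult_less_cancel_right1 power2_eq_square)
    have t3: "3 - t^2 > 0" using t1 by simp
    have d: "DERIV ?f t :> (1/(1+t) - (-1)/(1-t)) - (2 + 2*(3*t^2*(3-t^2) - t^3*(-2*t))/(3-t^2)^2)"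
      using t x t3 by (auto intro!: derivative_eq_intros simp: power2_eq_square)
    have "(1/(1+t) - (-1)/(1-t)) - (2 + 2*(3*t^2*(3-t^2) - t^3*(-2*t))/(3-t^2)^2)
        = 8*t^4/((1-t^2)*(3-t^2)^2)"
    proof -
      have e: "1/(1+t) - (-1)/(1-t) = 2/(1-t^2)" using t1 t x by (simp add: field_simps power2_eq_square)
      show ?thesis unfolding e using t1 t3 apply (simp add: divide_simps) by algebra
    qed
    moreover have "8*t^4/((1-t^2)*(3-t^2)^2) \<ge> 0" using t1 by simp
    ultimately show "\<exists>y. DERIV ?f t :> y \<and> y \<ge> 0" using d by auto
  next
    have "\<forall>t\<in>{0..x}. 3 - t^2 \<noteq> 0 \<and> 1 + t > 0 \<and> 1 - t > 0"
      using x by (auto simp: power2_eq_square) (smt (verit) mult_le_one mult_strict_mono)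
    then show "continuous_on {0..x} ?f" by (intro continuous_intros) auto
  qed
  then show ?thesis by simp
qed


definition dd :: "nat \<Rightarrow> real" where
  "dd n = ln (fact n) - (real n + 1/2) * ln (real n) + real n"

lemma dd_diff:
  assumes "n \<ge> 1"
  shows "dd n - dd (Suc n) = (real n + 1/2) * (ln (1 + 1/(2*real n+1)) - ln (1 - 1/(2*real n+1))) - 1"
proof -
  have n: "real n > 0" using assms by simp
  have e1: "1 + 1/(2*real n+1) = 2 * (real n + 1) / (2*real n+1)" using n by (simp add: field_simps)
  have e2: "1 - 1/(2*real n+1) = 2 * real n / (2*real n+1)" using n by (simp add: field_simps)
  have l: "ln (1 + 1/(2*real n+1)) - ln (1 - 1/(2*real n+1)) = ln (real n + 1) - ln (real n)"
  proof -
    have a1: "ln (2 * (real n + 1) / (2*real n+1)) = ln (2 * (real n + 1)) - ln (2*real n+1)"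
      by (rule ln_divide_pos) (use n in auto)
    have a2: "ln (2 * (real n + 1)) = ln 2 + ln (real n + 1)" by (rule ln_mult_pos) (use n in auto)
    have a: "ln (2 * (real n + 1) / (2*real n+1)) = ln 2 + ln (real n + 1) - ln (2*real n+1)"
      unfolding a1 a2 ..
    have b1: "ln (2 * real n / (2*real n+1)) = ln (2 * real n) - ln (2*real n+1)"
      by (rule ln_divide_pos) (use n in auto)
    have b2: "ln (2 * real n) = ln 2 + ln (real n)" by (rule ln_mult_pos) (use n in auto)
    have b: "ln (2 * real n / (2*real n+1)) = ln 2 + ln (real n) - ln (2*real n+1)"
      unfolding b1 b2 ..
    show ?thesis unfolding e1 e2 a b by simp
  qed
  have f: "ln (fact (Suc n) :: real) = ln (real n + 1) + ln (fact n)"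
    by (simp add: ln_mult_pos add.commute)
  show ?thesis unfolding l dd_def f by (simp add: algebra_simps)
qed

lemma dd_diff_upper:
  assumes "n \<ge> 1"
  shows "dd n - dd (Suc n) \<le> 1/(12*real n) - 1/(12*real (Suc n))"
proof -
  define a where "a = 2*real n+1"
  define x where "x = 1/a"
  have n: "real n \<ge> 1" using assms by simp
  have ap: "a > 0" "a \<ge> 3" using n by (auto simp: a_def)
  have x: "0 \<le> x" "x < 1" using ap by (auto simp: x_def)
  have "dd n - dd (Suc n) \<le> (real n + 1/2) * (2*x + 2*x^3/(3*(1-x^2))) - 1"
    unfolding dd_diff[OF assms] x_def a_def[symmetric]
    using ln_ratio_upper[OF x[unfolded x_def]] n by (intro diff_right_mono mult_left_mono) auto
  also have "\<dots> = 1/(12*real n) - 1/(12*real (Suc n))"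
  proof -
    have a2: "a^2 - 1 = 4*real n*(real n+1)" by (simp add: a_def power2_eq_square algebra_simps)
    have y: "1 - x^2 = (a^2 - 1)/a^2" using ap unfolding x_def
      by (simp add: field_simps)
    have q: "a^2 - 1 > 0" using a2 n by simp
    have z: "2*x^3/(3*(1-x^2)) = 2/(a*3*(a^2-1))" unfolding y using ap q unfolding x_def
      by (simp add: field_simps power2_eq_square power3_eq_cube)
    have w: "(real n + 1/2) * (2*x) = 1" using ap unfolding x_def a_def by (simp add: field_simps)
    have v: "(real n + 1/2) = a/2" by (simp add: a_def)
    have "(real n + 1/2) * (2/(a*3*(4*real n*(real n+1)))) = 1/(12*real n*(real n+1))"
      unfolding v using ap by simp
    also have "\<dots> = 1/(12*real n) - 1/(12*real (Suc n))" using n by (simp add: field_simps)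
    finally show ?thesis unfolding distrib_left w z a2 by simp
  qed
  finally show ?thesis .
qed

lemma dd_diff_lower:
  assumes "n \<ge> 1"
  shows "1/(12*real n + 1) - 1/(12*real (Suc n) + 1) \<le> dd n - dd (Suc n)"
proof -
  define a where "a = 2*real n+1"
  define x where "x = 1/a"
  have n: "real n \<ge> 1" using assms by simp
  have ap: "a > 0" "a \<ge> 3" using n by (auto simp: a_def)
  have x: "0 \<le> x" "x < 1" using ap by (auto simp: x_def)
  have "a*a \<ge> 3*3" using ap by (intro mult_mono) auto
  then have p: "0 < 3*a^2 - 1" by (simp add: power2_eq_square)
  have "1/(12*real n + 1) - 1/(12*real (Suc n) + 1) = 12/((12*real n + 1)*(12*real n + 13))"
    using n by (simp add: field_simps)
  also have "\<dots> \<le> 1 / (3*a^2 - 1)"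
  proof -
    have D: "(12*real n + 1)*(12*real n + 13) > 0" using n by simp
    have "12 * (3*a^2 - 1) \<le> (12*real n + 1)*(12*real n + 13)"
      using n by (simp add: a_def power2_eq_square algebra_simps)
    then show ?thesis using D p by (simp add: divide_simps)
  qed
  also have "\<dots> = (real n + 1/2) * (2*x + 2*x^3/(3-x^2)) - 1"
  proof -
    have y: "3 - x^2 = (3*a^2 - 1)/a^2" using ap unfolding x_def
      by (simp add: field_simps)
    have z: "2*x^3/(3-x^2) = 2/(a*(3*a^2 - 1))" unfolding y using ap p unfolding x_def
      by (simp add: field_simps power2_eq_square power3_eq_cube)
    have w: "(real n + 1/2) * (2*x) = 1" using ap unfolding x_def a_def by (simp add: field_simps)
    have v: "(real n + 1/2) = a/2" by (simp add: a_def)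
    show ?thesis unfolding distrib_left w z using ap p by (simp add: v field_simps)
  qed
  also have "\<dots> \<le> dd n - dd (Suc n)"
    unfolding dd_diff[OF assms] x_def a_def[symmetric]
    using ln_ratio_lower[OF x[unfolded x_def]] n by (intro diff_right_mono mult_left_mono) auto
  finally show ?thesis .
qed


lemma dd_conv:
  obtains C where "(\<lambda>k. dd (Suc k)) \<longlonglongrightarrow> C"
    "\<And>n. n \<ge> 1 \<Longrightarrow> dd n - 1/(12*real n) \<le> C"
    "\<And>n. n \<ge> 1 \<Longrightarrow> C \<le> dd n - 1/(12*real n + 1)"
proof -
  define A where "A k = dd (Suc k) - 1/(12*real (Suc k))" for k
  define B where "B k = dd (Suc k) - 1/(12*real (Suc k) + 1)" for k
  have incA: "incseq A"
  proof (rule incseq_SucI)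
    fix k show "A k \<le> A (Suc k)"
      using dd_diff_upper[of "Suc k"] unfolding A_def by simp
  qed
  have decB: "decseq B"
  proof (rule decseq_SucI)
    fix k show "B (Suc k) \<le> B k"
      using dd_diff_lower[of "Suc k"] unfolding B_def by simp
  qed
  have AB: "A k \<le> B k" for k
    unfolding A_def B_def by (simp add: frac_le)
  have "\<forall>i. A i \<le> B 0"
  proof
    fix i show "A i \<le> B 0" using AB[of i] decseqD[OF decB, of 0 i] by simp
  qed
  then obtain C where CA: "A \<longlonglongrightarrow> C" "\<forall>i. A i \<le> C" using incseq_convergent[OF incA] by blast
  have "\<forall>i. A 0 \<le> B i"
  proof
    fix i show "A 0 \<le> B i" using AB[of i] incseqD[OF incA, of 0 i] by simp
  qed
  then obtain C' where CB: "B \<longlonglongrightarrow> C'" "\<forall>i. C' \<le> B i" using decseq_convergent[OF decB] by blast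
  have inv: "(\<lambda>k. 1/(12*real (Suc k))) \<longlonglongrightarrow> 0"
  proof -
    have "(\<lambda>k. (1/12) * inverse (real (Suc k))) \<longlonglongrightarrow> (1/12) * 0"
      by (intro tendsto_intros LIMSEQ_inverse_real_of_nat)
    then show ?thesis by (simp add: field_simps)
  qed
  have inv2: "(\<lambda>k. 1/(12*real (Suc k) + 1)) \<longlonglongrightarrow> 0"
  proof (rule Lim_null_comparison[OF _ inv])
    show "\<forall>\<^sub>F k in sequentially. norm (1/(12*real (Suc k) + 1)) \<le> 1/(12*real (Suc k))"
      by (intro always_eventually allI) (simp add: frac_le)
  qed
  have dA: "(\<lambda>k. dd (Suc k)) \<longlonglongrightarrow> C"
  proof -
    have "(\<lambda>k. A k + 1/(12*real (Suc k))) \<longlonglongrightarrow> C + 0" by (intro tendsto_intros CA inv)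
    then show ?thesis by (simp add: A_def)
  qed
  have dB: "(\<lambda>k. dd (Suc k)) \<longlonglongrightarrow> C'"
  proof -
    have "(\<lambda>k. B k + 1/(12*real (Suc k) + 1)) \<longlonglongrightarrow> C' + 0" by (intro tendsto_intros CB inv2)
    then show ?thesis by (simp add: B_def)
  qed
  have "C = C'" using LIMSEQ_unique[OF dA dB] .
  show ?thesis
  proof
    show "(\<lambda>k. dd (Suc k)) \<longlonglongrightarrow> C" by (rule dA)
  next
    fix n :: nat assume "n \<ge> 1"
    then obtain k where k: "n = Suc k" by (cases n) auto
    show "dd n - 1/(12*real n) \<le> C" using CA(2) k by (auto simp: A_def)
    show "C \<le> dd n - 1/(12*real n + 1)" using CB(2) k \<open>C = C'\<close> by (auto simp: B_def)
  qed
qed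

lemma wallis_aux:
  fixes F G m p :: real assumes "F > 0" "G > 0" "m \<ge> 0"
  shows "p * F^4 / (G^2 * (2*m+1)) * (4*(m+1)^2 / ((2*m+1)*(2*m+3)))
       = (p*16) * ((m+1)*F)^4 / (((2*m+2)*(2*m+1)*G)^2 * (2*m+3))"
proof -
  have "2*m+1 > 0" "2*m+3 > 0" "m+1>0" using assms by auto
  then show ?thesis using assms apply (simp add: divide_simps) by algebra
qed

lemma wallis_fact:
  "(\<Prod>k=1..n. (4*real k^2) / (4*real k^2 - 1)) =
     2^(4*n) * (fact n)^4 / ((fact (2*n))^2 * (2*real n+1))"
proof (induction n)
  case 0 then show ?case by simp
next
  case (Suc n)
  have f2: "(fact (2 * Suc n) :: real) = (2*real n+2)*(2*real n+1)*fact (2*n)"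
    by (simp add: algebra_simps)
  have f1: "(fact (Suc n) :: real) = (real n+1)*fact n" by simp
  have pos: "(fact (2*n) :: real) > 0" "(fact n :: real) > 0" by auto
  have d: "4*(real n + 1)^2 - 1 = (2*real n+1)*(2*real n+3)" by (simp add: power2_eq_square algebra_simps)
  have "(\<Prod>k=1..Suc n. (4*real k^2) / (4*real k^2 - 1)) =
     (2^(4*n) * (fact n)^4 / ((fact (2*n))^2 * (2*real n+1))) * ((4*(real n+1)^2) / (4*(real n+1)^2 - 1))"
  proof -
    have "(\<Prod>k=1..Suc n. (4*real k^2) / (4*real k^2 - 1)) =
      (\<Prod>k=1..n. (4*real k^2) / (4*real k^2 - 1)) * ((4*real (Suc n)^2) / (4*real (Suc n)^2 - 1))"
      by (simp add: prod.cl_ivl_Suc)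
    then show ?thesis unfolding Suc.IH by (simp add: add.commute)
  qed
  also have "\<dots> = 2^(4*Suc n) * (fact (Suc n))^4 / ((fact (2*Suc n))^2 * (2*real (Suc n)+1))"
    unfolding f1 f2 d using wallis_aux[OF pos(2) pos(1), of "real n" "2^(4*n)"]
    by (simp add: power_add mult.commute)
  finally show ?case .
qed


lemma ln_wallis:
  assumes "n \<ge> 1"
  shows "ln (2^(4*n) * (fact n)^4 / ((fact (2*n))^2 * (2*real n+1)))
       = 4 * dd n - 2 * dd (2*n) + ln (real n / (2*real n+1)) - ln 2"
proof -
  have n: "real n > 0" using assms by simp
  have p1: "(fact n :: real) > 0" "(fact (2*n) :: real) > 0" by auto
  have "ln (2^(4*n) * (fact n)^4 / ((fact (2*n))^2 * (2*real n+1)))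
      = ln (2^(4*n) * (fact n)^4) - ln ((fact (2*n))^2 * (2*real n+1))"
    by (rule ln_divide_pos) (use p1 n in auto)
  also have "ln (2^(4*n) * (fact n :: real)^4) = ln (2^(4*n)) + ln ((fact n)^4)"
    by (rule ln_mult_pos) (use p1 in auto)
  also have "ln ((fact (2*n))^2 * (2*real n+1)) = ln ((fact (2*n))^2) + ln (2*real n+1)"
    by (rule ln_mult_pos) (use p1 n in auto)
  also have "ln ((2::real)^(4*n)) = real (4*n) * ln 2" by (simp add: ln_realpow)
  also have "ln ((fact n :: real)^4) = 4 * ln (fact n)" by (simp add: ln_realpow)
  also have "ln ((fact (2*n) :: real)^2) = 2 * ln (fact (2*n))" by (simp add: ln_realpow)
  finally have main: "ln (2^(4*n) * (fact n)^4 / ((fact (2*n))^2 * (2*real n+1))) = real (4*n) * ln 2 + 4 * ln (fact n) - (2 * ln (fact (2*n)) + ln (2*real n + 1))" .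
  have r1: "ln (real n / (2*real n+1)) = ln (real n) - ln (2*real n+1)"
    by (rule ln_divide_pos) (use n in auto)
  have r2: "ln (real (2*n)) = ln 2 + ln (real n)"
    using ln_mult_pos[of 2 "real n"] n by simp
  show ?thesis unfolding main r1 dd_def r2 by (simp add: algebra_simps)
qed

lemma dd_limit: "(\<lambda>k. dd (Suc k)) \<longlonglongrightarrow> ln (2*pi) / 2"
  and stirling_bounds: "n \<ge> 1 \<Longrightarrow> dd n - 1/(12*real n) \<le> ln (2*pi) / 2"
    "n \<ge> 1 \<Longrightarrow> ln (2*pi) / 2 \<le> dd n - 1/(12*real n + 1)"
proof -
  obtain C where C: "(\<lambda>k. dd (Suc k)) \<longlonglongrightarrow> C"
    "\<And>n. n \<ge> 1 \<Longrightarrow> dd n - 1/(12*real n) \<le> C"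
    "\<And>n. n \<ge> 1 \<Longrightarrow> C \<le> dd n - 1/(12*real n + 1)"
    using dd_conv by blast
  have d1: "dd \<longlonglongrightarrow> C" using C(1) filterlim_sequentially_Suc[of dd] by blast
  have d2: "(\<lambda>n. dd (2*n)) \<longlonglongrightarrow> C"
  proof -
    have "strict_mono (\<lambda>n::nat. 2*n)" by (simp add: strict_mono_def)
    from LIMSEQ_subseq_LIMSEQ[OF d1 this] show ?thesis by (simp add: comp_def)
  qed
  have q: "(\<lambda>n. real n / (2*real n+1)) \<longlonglongrightarrow> 1/2"
  proof -
    have "(\<lambda>n. 1 / (2 + inverse (real n))) \<longlonglongrightarrow> 1 / (2 + 0)"
      by (intro tendsto_intros lim_inverse_n) auto
    then have "(\<lambda>n. 1 / (2 + inverse (real n))) \<longlonglongrightarrow> 1 / 2" by simp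
    moreover have "\<forall>\<^sub>F n in sequentially. 1 / (2 + inverse (real n)) = real n / (2*real n+1)"
      using eventually_ge_at_top[of "1::nat"]
      by eventually_elim (simp add: field_simps)
    ultimately show ?thesis by (rule Lim_transform_eventually)
  qed
  have "(\<lambda>n. 4 * dd n - 2 * dd (2*n) + ln (real n / (2*real n+1)) - ln 2) \<longlonglongrightarrow> 4*C - 2*C + ln (1/2) - ln 2"
    by (intro tendsto_intros d1 d2 q) auto
  moreover have "(\<lambda>n. 4 * dd n - 2 * dd (2*n) + ln (real n / (2*real n+1)) - ln 2) \<longlonglongrightarrow> ln (pi/2)"
  proof -
    have "(\<lambda>n. ln (\<Prod>k=1..n. (4*real k^2) / (4*real k^2 - 1))) \<longlonglongrightarrow> ln (pi/2)"
      by (intro tendsto_intros wallis) simp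
    moreover have "\<forall>\<^sub>F n in sequentially. ln (\<Prod>k=1..n. (4*real k^2) / (4*real k^2 - 1)) =
        4 * dd n - 2 * dd (2*n) + ln (real n / (2*real n+1)) - ln 2"
      using eventually_ge_at_top[of "1::nat"]
    proof eventually_elim
      case (elim n) show ?case unfolding wallis_fact by (rule ln_wallis[OF elim])
    qed
    ultimately show ?thesis by (rule Lim_transform_eventually)
  qed
  ultimately have "4*C - 2*C + ln (1/2) - ln 2 = ln (pi/2)" by (rule LIMSEQ_unique)
  moreover have "ln (1/2::real) = - ln 2" by (simp add: ln_inverse[symmetric])
  moreover have "ln (pi/2) = ln pi - ln 2" by (rule ln_divide_pos) (use pi_gt_zero in auto)
  moreover have "ln (2*pi) = ln 2 + ln pi" by (rule ln_mult_pos) (use pi_gt_zero in auto)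
  ultimately have Ceq: "C = ln (2*pi) / 2" by simp
  show "(\<lambda>k. dd (Suc k)) \<longlonglongrightarrow> ln (2*pi) / 2" using C(1) Ceq by simp
  show "n \<ge> 1 \<Longrightarrow> dd n - 1/(12*real n) \<le> ln (2*pi) / 2" using C(2) Ceq by simp
  show "n \<ge> 1 \<Longrightarrow> ln (2*pi) / 2 \<le> dd n - 1/(12*real n + 1)" using C(3) Ceq by simp
qed


lemma stirling_upper: "n \<ge> 1 \<Longrightarrow> ln (fact n) \<le> ln (2*pi)/2 + (real n + 1/2) * ln (real n) - real n + 1/(12*real n)"
  using stirling_bounds(1)[of n] unfolding dd_def by simp
lemma stirling_lower: "n \<ge> 1 \<Longrightarrow> ln (2*pi)/2 + (real n + 1/2) * ln (real n) - real n + 1/(12*real n + 1) \<le> ln (fact n)"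
  using stirling_bounds(2)[of n] unfolding dd_def by simp

lemma key_bound:
  fixes S :: "'a set" and k :: "'a \<Rightarrow> nat" and n M :: nat
  assumes S: "finite S" "card S \<ge> 2" and k: "\<And>x. x \<in> S \<Longrightarrow> k x \<ge> 1"
    and sk: "sum k S = n" and M: "real M * (\<Prod>x\<in>S. fact (k x)) \<le> fact n" "M \<ge> 1"
  shows "log 2 (real M) / real n \<le>
     - (\<Sum>x\<in>S. (real (k x)/real n) * log 2 (real (k x)/real n))
     + 1 / (real n)^2 * (1/12 - (\<Sum>x\<in>S. 1 / (12 * (real (k x)/real n) + 1)))
     + 1 / real n * (log 2 (sqrt (2*pi)) - (\<Sum>x\<in>S. log 2 (sqrt (2*pi*(real (k x)/real n)))))
     - log 2 (real n) / real n * ((real (card S) - 1) / 2)"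
proof -
  define N where "N = real n"
  define K where "K x = real (k x)" for x
  define c where "c = ln (2*pi)/2"
  have Kpos: "K x \<ge> 1" if "x \<in> S" for x using k[OF that] by (simp add: K_def)
  have sK: "sum K S = N" unfolding K_def N_def using sk by (metis of_nat_sum)
  obtain a b where ab: "a \<in> S" "b \<in> S" "a \<noteq> b"
    using S by (metis One_nat_def card_le_Suc0_iff_eq not_less_eq_eq numeral_2_eq_2)
  have n1: "n \<ge> 1"
  proof -
    have "k a \<le> n" using sk member_le_sum[OF ab(1), of k] S(1) by simp
    then show ?thesis using k[OF ab(1)] by simp
  qed
  have Npos: "N \<ge> 1" using n1 by (simp add: N_def)
  have ln2: "ln (2::real) > 0" "ln (2::real) < 1" using ln_2_less_1 by auto
  have lnM: "ln (real M) \<le> ln (fact n) - (\<Sum>x\<in>S. ln (fact (k x)))"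
  proof -
    have pp: "(\<Prod>x\<in>S. fact (k x) :: real) > 0" by (intro prod_pos) auto
    have "ln (real M * (\<Prod>x\<in>S. fact (k x))) \<le> ln (fact n)"
      using M pp by (intro ln_mono) auto
    moreover have "ln (real M * (\<Prod>x\<in>S. fact (k x))) = ln (real M) + (\<Sum>x\<in>S. ln (fact (k x)))"
      using M pp S(1) by (simp add: ln_mult_pos ln_prod)
    ultimately show ?thesis by simp
  qed
  have up: "ln (fact n) \<le> c + (N + 1/2) * ln N - N + 1/(12*N)"
    using stirling_upper[OF n1] by (simp add: c_def N_def)
  have lo: "(\<Sum>x\<in>S. c + (K x + 1/2) * ln (K x) - K x + 1/(12*K x + 1)) \<le> (\<Sum>x\<in>S. ln (fact (k x)))"
    by (intro sum_mono) (use stirling_lower k in \<open>force simp: c_def K_def\<close>)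
  have lo2: "(\<Sum>x\<in>S. c + (K x + 1/2) * ln (K x) - K x + 1/(12*K x + 1))
     = real (card S) * c + (\<Sum>x\<in>S. (K x + 1/2) * ln (K x)) - N + (\<Sum>x\<in>S. 1/(12*K x + 1))"
    by (simp add: sum.distrib sum_subtractf sK)
  define Q where "Q = 1/(12*N) - (\<Sum>x\<in>S. 1/(12*K x + N))"
  have Qle: "1/(12*N) - (\<Sum>x\<in>S. 1/(12*K x + 1)) \<le> Q"
  proof -
    have "(\<Sum>x\<in>S. 1/(12*K x + N)) \<le> (\<Sum>x\<in>S. 1/(12*K x + 1))"
      by (intro sum_mono frac_le) (use Kpos Npos in \<open>force+\<close>)
    then show ?thesis unfolding Q_def by simp
  qed
  have Qneg: "Q \<le> 0"
  proof -
    have Kle: "K x \<le> N" if "x \<in> S" for x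
    proof -
      have "\<And>y. y \<in> S - {x} \<Longrightarrow> 0 \<le> K y" using Kpos by force
      then show ?thesis using member_le_sum[OF that, of K] S(1) sK by auto
    qed
    have t: "1/(13*N) \<le> 1/(12*K x + N)" if "x \<in> S" for x
      using Kle[OF that] Kpos[OF that] Npos by (intro frac_le) auto
    have "(\<Sum>x\<in>{a,b}. 1/(12*K x + N)) \<le> (\<Sum>x\<in>S. 1/(12*K x + N))"
      using ab S Kpos Npos by (intro sum_mono2) (auto simp: K_def intro!: divide_nonneg_nonneg add_nonneg_nonneg)
    moreover have "(\<Sum>x\<in>{a,b}. 1/(12*K x + N)) \<ge> 2/(13*N)"
      using ab t[OF ab(1)] t[OF ab(2)] by simp
    moreover have "1/(12*N) \<le> 2/(13*N)" using Npos by (simp add: field_simps)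
    ultimately show ?thesis unfolding Q_def by linarith
  qed
  have QQ: "Q \<le> ln 2 * Q" using Qneg ln2 by (simp add: mult_le_cancel_right1)
  have lnM2: "ln (real M) \<le> c * (1 - real (card S)) + (N + 1/2) * ln N - (\<Sum>x\<in>S. (K x + 1/2) * ln (K x)) + ln 2 * Q"
    using lnM up lo lo2 Qle QQ by (simp add: algebra_simps)
  have E1: "(\<Sum>x\<in>S. (K x/N) * log 2 (K x/N)) * (N * ln 2) = (\<Sum>x\<in>S. K x * ln (K x)) - N * ln N"
  proof -
    have "(\<Sum>x\<in>S. (K x/N) * log 2 (K x/N)) * (N * ln 2) = (\<Sum>x\<in>S. K x * ln (K x) - K x * ln N)"
      unfolding sum_distrib_right
    proof (intro sum.cong refl)
      fix x assume x: "x \<in> S"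
      have lk: "ln (K x / N) = ln (K x) - ln N" using Kpos[OF x] Npos by (intro ln_divide_pos) auto
      show "K x / N * log 2 (K x / N) * (N * ln 2) = K x * ln (K x) - K x * ln N"
        unfolding log_def lk using Npos ln2 by (simp add: field_simps)
    qed
    also have "\<dots> = (\<Sum>x\<in>S. K x * ln (K x)) - N * ln N"
      by (simp add: sum_subtractf sum_distrib_right[symmetric] sK)
    finally show ?thesis .
  qed
  have E2: "(1 / N^2 * (1/12 - (\<Sum>x\<in>S. 1 / (12 * (K x/N) + 1)))) * (N * ln 2) = ln 2 * Q"
  proof -
    have "(\<Sum>x\<in>S. 1 / (12 * (K x/N) + 1)) = N * (\<Sum>x\<in>S. 1/(12*K x + N))"
      unfolding sum_distrib_left
      by (intro sum.cong refl) (use Npos Kpos in \<open>simp add: field_simps\<close>)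
    then show ?thesis unfolding Q_def using Npos by (simp add: field_simps power2_eq_square)
  qed
  have E3: "(1 / N * (log 2 (sqrt (2*pi)) - (\<Sum>x\<in>S. log 2 (sqrt (2*pi*(K x/N)))))) * (N * ln 2)
      = c - real (card S) * c - (1/2) * (\<Sum>x\<in>S. ln (K x)) + real (card S) / 2 * ln N"
  proof -
    have l1: "log 2 (sqrt (2*pi)) * ln 2 = c" unfolding c_def log_def using ln2
      by (simp add: ln_sqrt)
    have "(\<Sum>x\<in>S. log 2 (sqrt (2*pi*(K x/N)))) * ln 2 = (\<Sum>x\<in>S. c + (1/2) * ln (K x) - (1/2) * ln N)"
      unfolding sum_distrib_right
    proof (intro sum.cong refl)
      fix x assume x: "x \<in> S"
      have p: "2*pi*(K x/N) > 0" using Kpos[OF x] Npos by simp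
      have "ln (2*pi*(K x/N)) = ln (2*pi) + (ln (K x) - ln N)"
        using Kpos[OF x] Npos by (simp add: ln_mult_pos ln_divide_pos)
      then show "log 2 (sqrt (2*pi*(K x/N))) * ln 2 = c + (1/2) * ln (K x) - (1/2) * ln N"
        using ln2 p unfolding log_def c_def by (simp add: ln_sqrt field_simps)
    qed
    also have "\<dots> = real (card S) * c + (1/2) * (\<Sum>x\<in>S. ln (K x)) - real (card S) / 2 * ln N"
      by (simp add: sum.distrib sum_subtractf sum_distrib_left)
    finally have "(\<Sum>x\<in>S. log 2 (sqrt (2*pi*(K x/N)))) * ln 2 = real (card S) * c + (1/2) * (\<Sum>x\<in>S. ln (K x)) - real (card S) / 2 * ln N" .
    moreover have g: "\<And>A B::real. (1 / N * (A - B)) * (N * ln 2) = A * ln 2 - B * ln 2"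
      using Npos by (simp add: field_simps)
    ultimately show ?thesis unfolding g l1 by simp
  qed
  have E4: "(log 2 N / N * ((real (card S) - 1) / 2)) * (N * ln 2) = ln N * ((real (card S) - 1) / 2)"
    using Npos ln2 by (simp add: log_def)
  have E0: "(log 2 (real M) / N) * (N * ln 2) = ln (real M)"
    using Npos ln2 by (simp add: log_def)
  have sumsplit: "(\<Sum>x\<in>S. (K x + 1/2) * ln (K x)) = (\<Sum>x\<in>S. K x * ln (K x)) + (1/2) * (\<Sum>x\<in>S. ln (K x))"
    by (simp add: distrib_right sum.distrib sum_distrib_left)
  define R where "R = - (\<Sum>x\<in>S. (K x/N) * log 2 (K x/N))
     + 1 / N^2 * (1/12 - (\<Sum>x\<in>S. 1 / (12 * (K x/N) + 1)))
     + 1 / N * (log 2 (sqrt (2*pi)) - (\<Sum>x\<in>S. log 2 (sqrt (2*pi*(K x/N)))))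
     - log 2 N / N * ((real (card S) - 1) / 2)"
  have "R * (N * ln 2) = - ((\<Sum>x\<in>S. (K x/N) * log 2 (K x/N)) * (N * ln 2))
     + (1 / N^2 * (1/12 - (\<Sum>x\<in>S. 1 / (12 * (K x/N) + 1)))) * (N * ln 2)
     + (1 / N * (log 2 (sqrt (2*pi)) - (\<Sum>x\<in>S. log 2 (sqrt (2*pi*(K x/N)))))) * (N * ln 2)
     - (log 2 N / N * ((real (card S) - 1) / 2)) * (N * ln 2)"
    unfolding R_def by (simp add: algebra_simps)
  also have "\<dots> = c * (1 - real (card S)) + (N + 1/2) * ln N - (\<Sum>x\<in>S. (K x + 1/2) * ln (K x)) + ln 2 * Q"
    unfolding E1 E2 E3 E4 sumsplit by (simp add: field_simps)
  finally have "(log 2 (real M) / N) * (N * ln 2) \<le> R * (N * ln 2)" using lnM2 E0 by simp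
  then have "log 2 (real M) / N \<le> R" using Npos ln2 by (simp add: mult_le_cancel_right divide_le_eq)
  then show ?thesis unfolding R_def K_def N_def .
qed
lemma sum_nth_distinct:
  assumes "distinct xs"
  shows "(\<Sum>l<length xs. f (xs ! l)) = (\<Sum>x\<in>set xs. f x)"
proof -
  have "(\<Sum>x\<in>set xs. f x) = sum_list (map f xs)" using assms by (rule sum.distinct_set_conv_list)
  also have "\<dots> = (\<Sum>l=0..<length xs. map f xs ! l)" using sum.list_conv_set_nth[of "map f xs"] by simp
  also have "\<dots> = (\<Sum>l<length xs. f (xs ! l))" by (simp add: atLeast0LessThan)
  finally show ?thesis by simp
qed

theorem theorem2:
  fixes xs :: "complex list"
    and u :: "nat \<Rightarrow> complex^'n::finite"
    and D :: "nat \<Rightarrow> (complex^'n) set"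
    and M :: nat and \<sigma> k1 k2 \<epsilon> B \<delta> :: real
  assumes "distinct xs"
    and "\<sigma> > 0" and "k1 > 0" and "k2 > 0"
    and "inj_on u {..<M}"
    and "is_code_eBd \<sigma> k1 k2 M (set xs) \<epsilon> B \<delta> u D"
    and "constant_composition M u"
    and "\<forall>l<length xs. code_type M u (xs ! l) > 0"
  shows "code_rate M TYPE('n)
     \<le> entropy_list xs (code_type M u)
       + 1 / (real CARD('n))\<^sup>2 *
           (1/12 - (\<Sum>l<length xs. 1 / (12 * code_type M u (xs ! l) + 1)))
       + 1 / real CARD('n) *
           (log 2 (sqrt (2 * pi)) - (\<Sum>l<length xs. log 2 (sqrt (2 * pi * code_type M u (xs ! l)))))
       - log 2 (real CARD('n)) / real CARD('n) * ((real (length xs) - 1) / 2)"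
proof -
  define n where "n = CARD('n)"
  have npos: "n \<ge> 1" unfolding n_def by (simp add: Suc_leI)
  have code: "\<forall>i<M. \<forall>m. u i $ m \<in> set xs" using assms(6) unfolding is_code_eBd_def is_code_def by blast
  have rate: "code_rate M TYPE('n) = log 2 (real M) / real n" unfolding code_rate_def n_def by simp
  have l2sq: "log 2 (sqrt (2*pi)) \<ge> 0"
  proof -
    have "1 \<le> sqrt (2*pi)" using pi_gt3 by simp
    then show ?thesis by simp
  qed
  show ?thesis
  proof (cases "M = 0")
    case True
    then have ct: "code_type M u x = 0" for x unfolding code_type_def by simp
    have xs0: "xs = []" using assms(8) ct by (cases xs) auto
    have "0 \<le> log 2 (real n)" using npos by simp
    then have "0 \<le> 1 / (real n)\<^sup>2 * (1/12) + 1 / real n * log 2 (sqrt (2 * pi)) + log 2 (real n) / real n * (1 / 2)"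
      using l2sq npos by (intro add_nonneg_nonneg mult_nonneg_nonneg) auto
    then show ?thesis unfolding rate unfolding True xs0 n_def[symmetric] by (simp add: entropy_list_def log_def)
  next
    case False
    then have M1: "M \<ge> 1" by simp
    obtain ms :: "'n list" where ms: "distinct ms" "set ms = UNIV"
      using finite_distinct_list[of "UNIV :: 'n set"] by auto
    define lst where "lst v = map (\<lambda>m. v $ m) ms" for v :: "complex^'n"
    define A where "A = mset (lst (u 0))"
    have cnt: "count (mset (lst v)) x = card {m. v $ m = x}" for v x
    proof -
      have "count (mset (lst v)) x = length (filter ((=) x) (lst v))"
        by (simp add: count_mset count_list_eq_length_filter)
      also have "\<dots> = length (filter (\<lambda>m. x = v $ m) ms)" by (simp add: lst_def filter_map comp_def)
      also have "\<dots> = card {m. v $ m = x}" using ms by (simp add: distinct_length_filter eq_commute)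
      finally show ?thesis .
    qed
    have st: "seq_type v x = real (count (mset (lst v)) x) / real n" for v x
      unfolding seq_type_def cnt n_def ..
    have cc: "seq_type (u i) = code_type M u" if "i < M" for i
      using assms(7) that unfolding constant_composition_def by blast
    have ctA: "code_type M u x = real (count A x) / real n" for x
      using cc[OF M1[unfolded One_nat_def, THEN Suc_le_lessD]] st unfolding A_def by metis
    have msetA: "mset (lst (u i)) = A" if "i < M" for i
    proof (rule multiset_eqI)
      fix x
      have "seq_type (u i) x = seq_type (u 0) x" using cc[OF that] cc[of 0] M1 by simp
      then have "real (count (mset (lst (u i))) x) / real n = real (count A x) / real n"
        unfolding st A_def .
      then show "count (mset (lst (u i))) x = count A x" using npos by (simp add: divide_cancel_right)
    qed
    have injl: "inj lst"
    proof (rule injI)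
      fix v w assume "lst v = lst w"
      then have "\<forall>m\<in>set ms. v $ m = w $ m" unfolding lst_def by (simp add: map_eq_conv)
      then show "v = w" using ms by (simp add: vec_eq_iff)
    qed
    have sizeA: "size A = n" unfolding A_def lst_def n_def using ms
      by (simp add: distinct_card[symmetric])
    have Mle: "M \<le> card (permutations_of_multiset A)"
    proof -
      have "card ((lst \<circ> u) ` {..<M}) = M"
      proof -
        have "inj_on (lst \<circ> u) {..<M}" using assms(5) inj_on_subset[OF injl]
          by (intro comp_inj_on) auto
        then show ?thesis using card_image by fastforce
      qed
      moreover have "(lst \<circ> u) ` {..<M} \<subseteq> permutations_of_multiset A"
        using msetA by (auto intro: permutations_of_multisetI)
      ultimately show ?thesis by (metis card_mono finite_permutations_of_multiset)
    qed
    have Mfact: "real M * (\<Prod>x\<in>set_mset A. fact (count A x)) \<le> fact n"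
    proof -
      have "M * (\<Prod>x\<in>set_mset A. fact (count A x)) \<le> card (permutations_of_multiset A) * (\<Prod>x\<in>set_mset A. fact (count A x))"
        using Mle by simp
      also have "\<dots> = fact n" using card_permutations_of_multiset_aux[of A] sizeA by simp
      finally have "M * (\<Prod>x\<in>set_mset A. fact (count A x)) \<le> (fact n :: nat)" .
      then have "real (M * (\<Prod>x\<in>set_mset A. fact (count A x))) \<le> real (fact n)" by linarith
      then show ?thesis by (simp add: of_nat_prod)
    qed
    have setA: "set_mset A = set xs"
    proof
      show "set_mset A \<subseteq> set xs" unfolding A_def lst_def using code M1 by auto
      show "set xs \<subseteq> set_mset A"
      proof
        fix x assume "x \<in> set xs"
        then obtain l where l: "l < length xs" "x = xs ! l" by (auto simp: in_set_conv_nth)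
        then have "code_type M u x > 0" using assms(8) by simp
        then have "count A x > 0" unfolding ctA by (simp add: zero_less_divide_iff)
        then show "x \<in># A" by simp
      qed
    qed
    have ksum: "sum (count A) (set xs) = n"
      using sizeA setA by (simp add: size_multiset_overloaded_eq)
    have kpos: "count A x \<ge> 1" if "x \<in> set xs" for x using that setA by (simp add: Suc_leI)
    have L: "card (set xs) = length xs" using assms(1) by (rule distinct_card)
    have ent: "entropy_list xs (code_type M u) = - (\<Sum>x\<in>set xs. (real (count A x)/real n) * log 2 (real (count A x)/real n))"
      unfolding entropy_list_def ctA
      using sum_nth_distinct[OF assms(1), of "\<lambda>x. real (count A x)/real n * log 2 (real (count A x)/real n)"] by simp
    have s1: "(\<Sum>l<length xs. 1 / (12 * code_type M u (xs ! l) + 1)) = (\<Sum>x\<in>set xs. 1 / (12 * (real (count A x)/real n) + 1))"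
      unfolding ctA using sum_nth_distinct[OF assms(1), of "\<lambda>x. 1 / (12 * (real (count A x)/real n) + 1)"] by simp
    have s2: "(\<Sum>l<length xs. log 2 (sqrt (2 * pi * code_type M u (xs ! l)))) = (\<Sum>x\<in>set xs. log 2 (sqrt (2*pi*(real (count A x)/real n))))"
      unfolding ctA using sum_nth_distinct[OF assms(1), of "\<lambda>x. log 2 (sqrt (2*pi*(real (count A x)/real n)))"] by simp
    show ?thesis
    proof (cases "length xs \<ge> 2")
      case True
      have "log 2 (real M) / real n \<le>
         - (\<Sum>x\<in>set xs. (real (count A x)/real n) * log 2 (real (count A x)/real n))
         + 1 / (real n)^2 * (1/12 - (\<Sum>x\<in>set xs. 1 / (12 * (real (count A x)/real n) + 1)))
         + 1 / real n * (log 2 (sqrt (2*pi)) - (\<Sum>x\<in>set xs. log 2 (sqrt (2*pi*(real (count A x)/real n)))))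
         - log 2 (real n) / real n * ((real (card (set xs)) - 1) / 2)"
        by (rule key_bound) (use True L kpos ksum Mfact M1 setA in auto)
      then show ?thesis unfolding rate ent s1 s2 L n_def[symmetric] .
    next
      case False
      have "xs \<noteq> []" using code M1 by (metis empty_iff empty_set zero_less_one less_le_trans)
      with False obtain x0 where x0: "xs = [x0]" by (cases xs; cases "tl xs") auto
      have kx: "count A x0 = n" using ksum x0 by simp
      have "real M * fact n \<le> fact n" using Mfact setA x0 kx by simp
      then have "M = 1" using M1 by (simp add: mult_le_cancel_right1)
      have ct1: "code_type M u x0 = 1" unfolding ctA kx using npos by simp
      have "0 \<le> 1 / (real n)\<^sup>2 * (1/12 - 1/13)" by simp
      moreover have r0: "code_rate M TYPE('n) = 0" using rate \<open>M = 1\<close> by simp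
      ultimately show ?thesis unfolding r0 x0 using ct1
        by (simp add: entropy_list_def n_def)
    qed
  qed
qed
end
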